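(* For $a,b\in\mathbb{C}$ let $X_{a,b}\subset\mathbb{P}^1_x\times\mathbb{P}^1_y\times\mathbb{P}^1_z$ be the surface defined by \[F=Q_a(x_0,x_1,y_0,y_1)z_0^2+(x_0^2y_0^2+x_1^2y_1^2)z_0z_1+Q_b(x_0,x_1,y_0,y_1)z_1^2,\] where $Q_c=x_0^2y_1^2+c\,x_0x_1y_0y_1+x_1^2y_0^2$. Then $X_{a,b}$ is smooth if and only if \[(a^2-4)(b^2-4)(ab-2b-2a+3)(ab+2b+2a+3)(b^2-2ab+a^2+4)\neq0.\]
   Context: $(x_0:x_1),(y_0:y_1),(z_0:z_1)$ are homogeneous coordinates on $\mathbb{P}^1_x,\mathbb{P}^1_y,\mathbb{P}^1_z$. *)

theory Defs
  imports "HOL-Analysis.Analysis"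
begin

definition Qf :: "complex \<Rightarrow> complex \<Rightarrow> complex \<Rightarrow> complex \<Rightarrow> complex \<Rightarrow> complex" where
  "Qf c x0 x1 y0 y1 = x0^2 * y1^2 + c * x0 * x1 * y0 * y1 + x1^2 * y0^2"

definition Fab :: "complex \<Rightarrow> complex \<Rightarrow> complex \<Rightarrow> complex \<Rightarrow> complex \<Rightarrow> complex \<Rightarrow> complex \<Rightarrow> complex \<Rightarrow> complex" where
  "Fab a b x0 x1 y0 y1 z0 z1 =
     Qf a x0 x1 y0 y1 * z0^2 + (x0^2 * y0^2 + x1^2 * y1^2) * z0 * z1 + Qf b x0 x1 y0 y1 * z1^2"

text \<open>A point ((x0:x1),(y0:y1),(z0:z1)) of P^1 x P^1 x P^1 is a singular point of X_{a,b}
  if F vanishes there together with all its partial derivatives (Jacobian criterion).\<close>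
definition singular_point :: "complex \<Rightarrow> complex \<Rightarrow> complex \<Rightarrow> complex \<Rightarrow> complex \<Rightarrow> complex \<Rightarrow> complex \<Rightarrow> complex \<Rightarrow> bool" where
  "singular_point a b x0 x1 y0 y1 z0 z1 \<longleftrightarrow>
     (x0, x1) \<noteq> (0, 0) \<and> (y0, y1) \<noteq> (0, 0) \<and> (z0, z1) \<noteq> (0, 0) \<and>
     Fab a b x0 x1 y0 y1 z0 z1 = 0 \<and>
     deriv (\<lambda>t. Fab a b t x1 y0 y1 z0 z1) x0 = 0 \<and>
     deriv (\<lambda>t. Fab a b x0 t y0 y1 z0 z1) x1 = 0 \<and>
     deriv (\<lambda>t. Fab a b x0 x1 t y1 z0 z1) y0 = 0 \<and>
     deriv (\<lambda>t. Fab a b x0 x1 y0 t z0 z1) y1 = 0 \<and>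
     deriv (\<lambda>t. Fab a b x0 x1 y0 y1 t z1) z0 = 0 \<and>
     deriv (\<lambda>t. Fab a b x0 x1 y0 y1 z0 t) z1 = 0"

definition smooth_Xab :: "complex \<Rightarrow> complex \<Rightarrow> bool" where
  "smooth_Xab a b \<longleftrightarrow> \<not> (\<exists>x0 x1 y0 y1 z0 z1. singular_point a b x0 x1 y0 y1 z0 z1)"

end

theory Submission imports Defs begin

definition "PFx0 (a::complex) b x0 x1 y0 y1 z0 z1 = z0^2*(2*x0*y1^2 + a*x1*y0*y1) + z0*z1*(2*x0*y0^2) + z1^2*(2*x0*y1^2 + b*x1*y0*y1)"
definition "PFx1 (a::complex) b x0 x1 y0 y1 z0 z1 = z0^2*(a*x0*y0*y1 + 2*x1*y0^2) + z0*z1*(2*x1*y1^2) + z1^2*(b*x0*y0*y1 + 2*x1*y0^2)"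
definition "PFy0 (a::complex) b x0 x1 y0 y1 z0 z1 = z0^2*(a*x0*x1*y1 + 2*x1^2*y0) + z0*z1*(2*x0^2*y0) + z1^2*(b*x0*x1*y1 + 2*x1^2*y0)"
definition "PFy1 (a::complex) b x0 x1 y0 y1 z0 z1 = z0^2*(2*x0^2*y1 + a*x0*x1*y0) + z0*z1*(2*x1^2*y1) + z1^2*(2*x0^2*y1 + b*x0*x1*y0)"
definition "PFz0 (a::complex) (b::complex) x0 x1 y0 y1 z0 z1 = 2*z0*Qf a x0 x1 y0 y1 + z1*(x0^2*y0^2+x1^2*y1^2)"
definition "PFz1 (a::complex) (b::complex) x0 x1 y0 y1 z0 z1 = z0*(x0^2*y0^2+x1^2*y1^2) + 2*z1*Qf b x0 x1 y0 y1"

lemma sing_iff: "singular_point a b x0 x1 y0 y1 z0 z1 \<longleftrightarrow>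
     (x0, x1) \<noteq> (0, 0) \<and> (y0, y1) \<noteq> (0, 0) \<and> (z0, z1) \<noteq> (0, 0) \<and>
     Fab a b x0 x1 y0 y1 z0 z1 = 0 \<and>
     PFx0 a b x0 x1 y0 y1 z0 z1 = 0 \<and> PFx1 a b x0 x1 y0 y1 z0 z1 = 0 \<and>
     PFy0 a b x0 x1 y0 y1 z0 z1 = 0 \<and> PFy1 a b x0 x1 y0 y1 z0 z1 = 0 \<and>
     PFz0 a b x0 x1 y0 y1 z0 z1 = 0 \<and> PFz1 a b x0 x1 y0 y1 z0 z1 = 0"
proof -
  have 1: "deriv (\<lambda>t. Fab a b t x1 y0 y1 z0 z1) x0 = PFx0 a b x0 x1 y0 y1 z0 z1"
    apply (rule DERIV_imp_deriv) unfolding Fab_def Qf_def PFx0_def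
    apply (rule derivative_eq_intros refl)+
    by (simp add: algebra_simps power2_eq_square)
  have 2: "deriv (\<lambda>t. Fab a b x0 t y0 y1 z0 z1) x1 = PFx1 a b x0 x1 y0 y1 z0 z1"
    apply (rule DERIV_imp_deriv) unfolding Fab_def Qf_def PFx1_def
    apply (rule derivative_eq_intros refl)+
    by (simp add: algebra_simps power2_eq_square)
  have 3: "deriv (\<lambda>t. Fab a b x0 x1 t y1 z0 z1) y0 = PFy0 a b x0 x1 y0 y1 z0 z1"
    apply (rule DERIV_imp_deriv) unfolding Fab_def Qf_def PFy0_def
    apply (rule derivative_eq_intros refl)+
    by (simp add: algebra_simps power2_eq_square)
  have 4: "deriv (\<lambda>t. Fab a b x0 x1 y0 t z0 z1) y1 = PFy1 a b x0 x1 y0 y1 z0 z1"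
    apply (rule DERIV_imp_deriv) unfolding Fab_def Qf_def PFy1_def
    apply (rule derivative_eq_intros refl)+
    by (simp add: algebra_simps power2_eq_square)
  have 5: "deriv (\<lambda>t. Fab a b x0 x1 y0 y1 t z1) z0 = PFz0 a b x0 x1 y0 y1 z0 z1"
    apply (rule DERIV_imp_deriv) unfolding Fab_def PFz0_def
    apply (rule derivative_eq_intros refl)+
    by (simp add: algebra_simps power2_eq_square)
  have 6: "deriv (\<lambda>t. Fab a b x0 x1 y0 y1 z0 t) z1 = PFz1 a b x0 x1 y0 y1 z0 z1"
    apply (rule DERIV_imp_deriv) unfolding Fab_def PFz1_def
    apply (rule derivative_eq_intros refl)+
    by (simp add: algebra_simps power2_eq_square)
  show ?thesis unfolding singular_point_def 1 2 3 4 5 6 ..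
qed


lemma sq4: "(a::complex)^2 = 4 \<Longrightarrow> a = 2 \<or> a = -2"
proof -
  assume "a^2 = 4"
  then have "(a-2)*(a+2) = 0" by (simp add: algebra_simps power2_eq_square)
  then show ?thesis by (simp add: eq_neg_iff_add_eq_0)
qed

lemma ex_a: assumes "a^2 = (4::complex)" shows "\<exists>x0 x1 y0 y1 z0 z1. singular_point a b x0 x1 y0 y1 z0 z1"
proof -
  obtain r where r2: "r^2 = \<i>" using power2_csqrt by blast
  have r4: "r^4 = -1" using r2 by (metis power2_i power_mult numeral_Bit0 mult_2_right power2_eq_square)
  have r4': "r * (r * (r * r)) = -1" using r4 by (simp add: eval_nat_numeral algebra_simps)
  from sq4[OF assms] show ?thesis
  proof
    assume [simp]: "a = 2"
    have "singular_point a b 1 r 1 (-r) 1 0"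
      unfolding sing_iff Fab_def PFx0_def PFx1_def PFy0_def PFy1_def PFz0_def PFz1_def Qf_def
      using r4' \<open>a = 2\<close> by (intro conjI; simp add: algebra_simps power2_eq_square)
    then show ?thesis by blast
  next
    assume [simp]: "a = -2"
    have "singular_point a b 1 r 1 r 1 0"
      unfolding sing_iff Fab_def PFx0_def PFx1_def PFy0_def PFy1_def PFz0_def PFz1_def Qf_def
      using r4' \<open>a = -2\<close> by (intro conjI; simp add: algebra_simps power2_eq_square)
    then show ?thesis by blast
  qed
qed

lemma ex_b: assumes "b^2 = (4::complex)" shows "\<exists>x0 x1 y0 y1 z0 z1. singular_point a b x0 x1 y0 y1 z0 z1"
proof -
  obtain r where r2: "r^2 = \<i>" using power2_csqrt by blast
  have r4: "r^4 = -1" using r2 by (metis power2_i power_mult numeral_Bit0 mult_2_right power2_eq_square)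
  have r4': "r * (r * (r * r)) = -1" using r4 by (simp add: eval_nat_numeral algebra_simps)
  from sq4[OF assms] show ?thesis
  proof
    assume [simp]: "b = 2"
    have "singular_point a b 1 r 1 (-r) 0 1"
      unfolding sing_iff Fab_def PFx0_def PFx1_def PFy0_def PFy1_def PFz0_def PFz1_def Qf_def
      using r4' \<open>b = 2\<close> by (intro conjI; simp add: algebra_simps power2_eq_square)
    then show ?thesis by blast
  next
    assume [simp]: "b = -2"
    have "singular_point a b 1 r 1 r 0 1"
      unfolding sing_iff Fab_def PFx0_def PFx1_def PFy0_def PFy1_def PFz0_def PFz1_def Qf_def
      using r4' \<open>b = -2\<close> by (intro conjI; simp add: algebra_simps power2_eq_square)
    then show ?thesis by blast
  qed
qed

lemma ex_c: assumes "a*b + 2*b + 2*a + (3::complex) = 0" shows "\<exists>x0 x1 y0 y1 z0 z1. singular_point a b x0 x1 y0 y1 z0 z1"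
proof -
  have "singular_point a b 1 1 1 1 (2+b) (-1)"
      unfolding sing_iff Fab_def PFx0_def PFx1_def PFy0_def PFy1_def PFz0_def PFz1_def Qf_def
      using assms by (intro conjI; (simp; fail)?; (simp only: power_one mult_1_left mult_1_right one_power2 mult_zero_left mult_zero_right power_zero_numeral add_0_left add_0_right)?; algebra)
  then show ?thesis by blast
qed

lemma ex_c': assumes "a*b - 2*b - 2*a + (3::complex) = 0" shows "\<exists>x0 x1 y0 y1 z0 z1. singular_point a b x0 x1 y0 y1 z0 z1"
proof -
  have "singular_point a b 1 (-1) 1 1 (2-b) (-1)"
      unfolding sing_iff Fab_def PFx0_def PFx1_def PFy0_def PFy1_def PFz0_def PFz1_def Qf_def
      using assms by (intro conjI; (simp; fail)?; (simp only: power_one mult_1_left mult_1_right one_power2 mult_zero_left mult_zero_right power_zero_numeral add_0_left add_0_right)?; algebra)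
  then show ?thesis by blast
qed

lemma ex_d: assumes "b^2 - 2*a*b + a^2 + (4::complex) = 0" shows "\<exists>x0 x1 y0 y1 z0 z1. singular_point a b x0 x1 y0 y1 z0 z1"
proof -
  obtain P where P: "P^2 = 4*\<i> + 2*(2-b)*(a-b)*\<i>" using power2_csqrt by blast
  obtain M where M: "M^2 = 4*\<i> - 2*(2+b)*(a-b)*\<i>" using power2_csqrt by blast
  have i2: "\<i>^2 = (-1::complex)" by simp
  have "singular_point a b 4 (P+M) 4 (P-M) 1 \<i>"
      unfolding sing_iff Fab_def PFx0_def PFx1_def PFy0_def PFy1_def PFz0_def PFz1_def Qf_def
      using assms P M i2 by (intro conjI; (simp; fail)?; (simp only: power_one mult_1_left mult_1_right one_power2 mult_zero_left mult_zero_right power_zero_numeral add_0_left add_0_right)?; algebra)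
  then show ?thesis by blast
qed

lemma fw_z0:
  assumes nx: "(x0, x1) \<noteq> (0::complex, 0)" and ny: "(y0, y1) \<noteq> (0::complex, 0)" and z0: "z0 = 0" and z1: "z1 \<noteq> 0"
    and e1: "PFx0 a b x0 x1 y0 y1 z0 z1 = 0" and e2: "PFx1 a b x0 x1 y0 y1 z0 z1 = 0"
    and e3: "PFz0 a b x0 x1 y0 y1 z0 z1 = 0"
  shows "b^2 = 4"
proof (rule ccontr)
  assume nb: "b^2 \<noteq> 4"
  have P: "x0^2*y0^2+x1^2*y1^2 = 0" using e3 z0 z1 by (simp add: PFz0_def)
  have g0: "2*x0*y1^2 + b*x1*y0*y1 = 0" using e1 z0 z1 by (simp add: PFx0_def)
  have g1: "b*x0*y0*y1 + 2*x1*y0^2 = 0" using e2 z0 z1 by (simp add: PFx1_def)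
  have h0: "(4-b^2)*(x0*y0*y1^2) = 0" using g0 g1 by algebra
  have h1: "(4-b^2)*(x1*y0^2*y1) = 0" using g0 g1 by algebra
  have nb': "4 - b^2 \<noteq> 0" using nb by simp
  have k0: "x0*y0*y1^2 = 0" using h0 nb' by simp
  have k1: "x1*y0^2*y1 = 0" using h1 nb' by simp
  show False
  proof (cases "y0 = 0")
    case True
    then have "y1 \<noteq> 0" using ny by simp
    then have "x0 = 0" using g0 True by simp
    then have "x1 = 0" using P True \<open>y1 \<noteq> 0\<close> by simp
    then show False using nx \<open>x0 = 0\<close> by simp
  next
    case False
    show False
    proof (cases "y1 = 0")
      case True
      then have "x1 = 0" using g1 False by simp
      then have "x0 = 0" using P True False by simp
      then show False using nx \<open>x1 = 0\<close> by simp
    next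
      case F2: False
      then show False using k0 k1 False nx by simp
    qed
  qed
qed

lemma fw_z1:
  assumes nx: "(x0, x1) \<noteq> (0::complex, 0)" and ny: "(y0, y1) \<noteq> (0::complex, 0)" and z1: "z1 = 0" and z0: "z0 \<noteq> 0"
    and e1: "PFx0 a b x0 x1 y0 y1 z0 z1 = 0" and e2: "PFx1 a b x0 x1 y0 y1 z0 z1 = 0"
    and e3: "PFz1 a b x0 x1 y0 y1 z0 z1 = 0"
  shows "a^2 = 4"
proof -
  have "PFx0 b a x0 x1 y0 y1 z1 z0 = 0" using e1 z1 by (simp add: PFx0_def)
  moreover have "PFx1 b a x0 x1 y0 y1 z1 z0 = 0" using e2 z1 by (simp add: PFx1_def)
  moreover have "PFz0 b a x0 x1 y0 y1 z1 z0 = 0" using e3 z1 by (simp add: PFz0_def PFz1_def)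
  ultimately show ?thesis using fw_z0[OF nx ny z1 z0] by blast
qed

lemma fw_nz:
  assumes nx: "(x0, x1) \<noteq> (0::complex, 0)" and ny: "(y0, y1) \<noteq> (0::complex, 0)" and z1: "z1 \<noteq> 0" and z0: "z0 \<noteq> 0"
    and e1: "PFx0 a b x0 x1 y0 y1 z0 z1 = 0" and e2: "PFx1 a b x0 x1 y0 y1 z0 z1 = 0"
    and e3: "PFy0 a b x0 x1 y0 y1 z0 z1 = 0" and e4: "PFy1 a b x0 x1 y0 y1 z0 z1 = 0"
    and e5: "PFz0 a b x0 x1 y0 y1 z0 z1 = 0"
  shows "x0 \<noteq> 0 \<and> x1 \<noteq> 0 \<and> y0 \<noteq> 0 \<and> y1 \<noteq> 0"
proof (intro conjI notI)
  assume x: "x0 = 0"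
  then have "x1 \<noteq> 0" using nx by simp
  then have "y1 = 0" using e4 x z0 z1 by (simp add: PFy1_def)
  then have "y0 = 0" using e5 x z0 z1 \<open>x1 \<noteq> 0\<close> by (simp add: PFz0_def Qf_def)
  then show False using ny \<open>y1 = 0\<close> by simp
next
  assume x: "x1 = 0"
  then have "x0 \<noteq> 0" using nx by simp
  then have "y0 = 0" using e3 x z0 z1 by (simp add: PFy0_def)
  then have "y1 = 0" using e5 x z0 z1 \<open>x0 \<noteq> 0\<close> by (simp add: PFz0_def Qf_def)
  then show False using ny \<open>y0 = 0\<close> by simp
next
  assume y: "y0 = 0"
  then have "y1 \<noteq> 0" using ny by simp
  then have "x1 = 0" using e2 y z0 z1 by (simp add: PFx1_def)
  then have "x0 = 0" using e5 y z0 z1 \<open>y1 \<noteq> 0\<close> by (simp add: PFz0_def Qf_def)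
  then show False using nx \<open>x1 = 0\<close> by simp
next
  assume y: "y1 = 0"
  then have "y0 \<noteq> 0" using ny by simp
  then have "x0 = 0" using e1 y z0 z1 by (simp add: PFx0_def)
  then have "x1 = 0" using e5 y z0 z1 \<open>y0 \<noteq> 0\<close> by (simp add: PFz0_def Qf_def)
  then show False using nx \<open>x0 = 0\<close> by simp
qed

lemma aff_main:
  fixes a b x y z :: complex
  assumes nz: "x \<noteq> 0" "y \<noteq> 0" "z \<noteq> 0"
    and f: "(y^2 + a*x*y + x^2) + z*(1 + x^2*y^2) + z^2*(y^2 + b*x*y + x^2) = 0"
    and fx: "a*y + 2*x + 2*x*y^2*z + z^2*(b*y + 2*x) = 0"
    and fy: "2*y + a*x + 2*x^2*y*z + z^2*(2*y + b*x) = 0"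
    and fz: "1 + x^2*y^2 + 2*z*(y^2 + b*x*y + x^2) = 0"
  shows "(a^2 - 4) * (b^2 - 4) * (a*b - 2*b - 2*a + 3) * (a*b + 2*b + 2*a + 3) * (b^2 - 2*a*b + a^2 + 4) = 0"
proof -
  have "(x^2-y^2)*(1+z^2) = 0" using fx fy by algebra
  then consider "1+z^2 = 0" | "x^2 = y^2" by auto
  then show ?thesis
  proof cases
    case 1
    have "y*((a-b) + 2*x*y*z) = 0" using fx 1 by algebra
    then have w: "(a-b) + 2*x*y*z = 0" using nz by simp
    have "z*(b^2 - 2*a*b + a^2 + 4) = 0" using f w 1 by algebra
    then show ?thesis using nz by simp
  next
    case 2
    then have "(y-x)*(y+x) = 0" by algebra
    then consider "y = x" | "y = -x" by (auto simp: eq_neg_iff_add_eq_0)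
    then show ?thesis
    proof cases
      case 1
      have e2: "x*((2+a) + 2*x^2*z + (2+b)*z^2) = 0" using fx 1 by algebra
      then have e2': "(2+a) + 2*x^2*z + (2+b)*z^2 = 0" using nz by simp
      have "z*(1-x^4) = 0" using f e2' 1 by algebra
      then have X: "x^4 = 1" using nz by simp
      have "a*b + 2*b + 2*a + 3 = 0" using e2' fz X 1 by algebra
      then show ?thesis by simp
    next
      case 2
      have e2: "x*((2-a) + 2*x^2*z + (2-b)*z^2) = 0" using fx 2 by algebra
      then have e2': "(2-a) + 2*x^2*z + (2-b)*z^2 = 0" using nz by simp
      have "z*(1-x^4) = 0" using f e2' 2 by algebra
      then have X: "x^4 = 1" using nz by simp
      have "a*b - 2*b - 2*a + 3 = 0" using e2' fz X 2 by algebra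
      then show ?thesis by simp
    qed
  qed
qed

lemma fw:
  assumes "singular_point a b x0 x1 y0 y1 z0 z1"
  shows "(a^2 - 4) * (b^2 - 4) * (a*b - 2*b - 2*a + 3) * (a*b + 2*b + 2*a + 3) * (b^2 - 2*a*b + a^2 + 4) = 0"
proof -
  note S = assms[unfolded sing_iff]
  have nx: "(x0, x1) \<noteq> (0, 0)" and ny: "(y0, y1) \<noteq> (0, 0)" and nzz: "(z0, z1) \<noteq> (0, 0)" using S by auto
  have F: "Fab a b x0 x1 y0 y1 z0 z1 = 0" and e1: "PFx0 a b x0 x1 y0 y1 z0 z1 = 0" and e2: "PFx1 a b x0 x1 y0 y1 z0 z1 = 0"
    and e3: "PFy0 a b x0 x1 y0 y1 z0 z1 = 0" and e4: "PFy1 a b x0 x1 y0 y1 z0 z1 = 0"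
    and e5: "PFz0 a b x0 x1 y0 y1 z0 z1 = 0" and e6: "PFz1 a b x0 x1 y0 y1 z0 z1 = 0" using S by auto
  show ?thesis
  proof (cases "z0 = 0")
    case True
    then have "z1 \<noteq> 0" using nzz by simp
    from fw_z0[OF nx ny True this e1 e2 e5] show ?thesis by simp
  next
    case z0: False
    show ?thesis
    proof (cases "z1 = 0")
      case True
      from fw_z1[OF nx ny True z0 e1 e2 e6] show ?thesis by simp
    next
      case z1: False
      from fw_nz[OF nx ny z1 z0 e1 e2 e3 e4 e5] have n: "x0 \<noteq> 0" "x1 \<noteq> 0" "y0 \<noteq> 0" "y1 \<noteq> 0" by auto
      define x where "x = x1/x0"
      define y where "y = y1/y0"
      define z where "z = z1/z0"
      have X: "x1 = x0*x" "y1 = y0*y" "z1 = z0*z" using n z0 by (simp_all add: x_def y_def z_def)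
      have nz: "x \<noteq> 0" "y \<noteq> 0" "z \<noteq> 0" using n z0 z1 by (simp_all add: x_def y_def z_def)
      have "x0^2*y0^2*z0^2 * ((y^2 + a*x*y + x^2) + z*(1 + x^2*y^2) + z^2*(y^2 + b*x*y + x^2)) = 0"
        using F unfolding X Fab_def Qf_def by algebra
      then have f: "(y^2 + a*x*y + x^2) + z*(1 + x^2*y^2) + z^2*(y^2 + b*x*y + x^2) = 0" using n z0 by simp
      have "x0*y0^2*z0^2 * (a*y + 2*x + 2*x*y^2*z + z^2*(b*y + 2*x)) = 0"
        using e2 unfolding X PFx1_def by algebra
      then have fx: "a*y + 2*x + 2*x*y^2*z + z^2*(b*y + 2*x) = 0" using n z0 by simp
      have "x0^2*y0*z0^2 * (2*y + a*x + 2*x^2*y*z + z^2*(2*y + b*x)) = 0"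
        using e4 unfolding X PFy1_def by algebra
      then have fy: "2*y + a*x + 2*x^2*y*z + z^2*(2*y + b*x) = 0" using n z0 by simp
      have "x0^2*y0^2*z0 * (1 + x^2*y^2 + 2*z*(y^2 + b*x*y + x^2)) = 0"
        using e6 unfolding X PFz1_def Qf_def by algebra
      then have fz: "1 + x^2*y^2 + 2*z*(y^2 + b*x*y + x^2) = 0" using n z0 by simp
      show ?thesis by (rule aff_main[OF nz f fx fy fz])
    qed
  qed
qed

theorem proposition4p1:
  fixes a b :: complex
  shows "smooth_Xab a b \<longleftrightarrow>
    (a^2 - 4) * (b^2 - 4) * (a*b - 2*b - 2*a + 3) * (a*b + 2*b + 2*a + 3) * (b^2 - 2*a*b + a^2 + 4) \<noteq> 0"
proof
  assume "smooth_Xab a b"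
  then have ns: "\<not> (\<exists>x0 x1 y0 y1 z0 z1. singular_point a b x0 x1 y0 y1 z0 z1)" by (simp add: smooth_Xab_def)
  show "(a^2 - 4) * (b^2 - 4) * (a*b - 2*b - 2*a + 3) * (a*b + 2*b + 2*a + 3) * (b^2 - 2*a*b + a^2 + 4) \<noteq> 0"
  proof
    assume "(a^2 - 4) * (b^2 - 4) * (a*b - 2*b - 2*a + 3) * (a*b + 2*b + 2*a + 3) * (b^2 - 2*a*b + a^2 + 4) = 0"
    then consider "a^2 = 4" | "b^2 = 4" | "a*b - 2*b - 2*a + 3 = 0" | "a*b + 2*b + 2*a + 3 = 0" | "b^2 - 2*a*b + a^2 + 4 = 0"
      by (auto simp: mult_eq_0_iff)
    then show False using ns ex_a ex_b ex_c ex_c' ex_d by cases blast+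
  qed
next
  assume "(a^2 - 4) * (b^2 - 4) * (a*b - 2*b - 2*a + 3) * (a*b + 2*b + 2*a + 3) * (b^2 - 2*a*b + a^2 + 4) \<noteq> 0"
  then show "smooth_Xab a b" using fw unfolding smooth_Xab_def by blast
qed

end
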